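(* For each instance \(\mathcal{I}\) of 3-SAT, the graph \(G(\mathcal{I})\) constructed below is weakly chordal.
   Context: A graph is weakly chordal if neither it nor its complement contains an induced cycle of length at least 5. Let \(\mathcal{I}\) have variables \(x_1,\dots,x_k\) and clauses \(C_1,\dots,C_l\), each a disjunction of three literals. \(G(\mathcal{I})\) has vertices: literal vertices \(X=\{x_1,\dots,x_k,\overline{x_1},\dots,\overline{x_k}\}\); for each clause \(C_i\) three vertices \(a_i,c_i,t_i\); and four vertices \(r,p,q,u\). Edges: any two vertices of \(X\) are adjacent except the pairs \(x_j\overline{x_j}\); each \(\{a_i,c_i,t_i\}\) is a triangle; \(c_i\) is adjacent to the literal vertices of the literals occurring in \(C_i\); \(r\) is adjacent to every vertex except \(u\) and the \(t_i\); \(u\) is adjacent to every vertex except \(r\) and the \(t_i\); \(p\) is adjacent to every vertex of \(X\) and to \(q\); \(q\) is adjacent to every vertex of \(X\) and to every \(a_i\); there are no other edges. *)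

theory Defs
  imports Main
begin

definition compl_adj :: "('a \<Rightarrow> 'a \<Rightarrow> bool) \<Rightarrow> 'a \<Rightarrow> 'a \<Rightarrow> bool" where
  "compl_adj E u v \<longleftrightarrow> u \<noteq> v \<and> \<not> E u v"

definition induced_cycle :: "'a set \<Rightarrow> ('a \<Rightarrow> 'a \<Rightarrow> bool) \<Rightarrow> 'a list \<Rightarrow> bool" where
  "induced_cycle V E cs \<longleftrightarrow> length cs \<ge> 3 \<and> distinct cs \<and> set cs \<subseteq> V \<and>
     (\<forall>i < length cs. \<forall>j < length cs. i \<noteq> j \<longrightarrow>
        (E (cs ! i) (cs ! j) \<longleftrightarrow> (j = Suc i mod length cs \<or> i = Suc j mod length cs)))"

definition weakly_chordal :: "'a set \<Rightarrow> ('a \<Rightarrow> 'a \<Rightarrow> bool) \<Rightarrow> bool" where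
  "weakly_chordal V E \<longleftrightarrow>
     (\<forall>cs. induced_cycle V E cs \<longrightarrow> length cs < 5) \<and>
     (\<forall>cs. induced_cycle V (compl_adj E) cs \<longrightarrow> length cs < 5)"

text \<open>A literal (j, True) is x_j, (j, False) is the negation of x_j.  An instance is the number k
  of variables x_1..x_k together with the list of clauses C_1..C_l (clause C_i = cls ! (i-1)),
  each clause being a list of exactly three literals over x_1..x_k.\<close>
type_synonym literal = "nat \<times> bool"
type_synonym sat_inst = "nat \<times> literal list list"

definition wf_instance :: "sat_inst \<Rightarrow> bool" where
  "wf_instance I \<longleftrightarrow> (\<forall>C \<in> set (snd I). length C = 3 \<and> (\<forall>(j, b) \<in> set C. 1 \<le> j \<and> j \<le> fst I))"

datatype vtx = Lit bool nat | Av nat | Cv nat | Tv nat | Rv | Pv | Qv | Uv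

definition is_lit :: "vtx \<Rightarrow> bool" where
  "is_lit v \<longleftrightarrow> (\<exists>b j. v = Lit b j)"

definition is_t :: "vtx \<Rightarrow> bool" where
  "is_t v \<longleftrightarrow> (\<exists>i. v = Tv i)"

definition is_a :: "vtx \<Rightarrow> bool" where
  "is_a v \<longleftrightarrow> (\<exists>i. v = Av i)"

definition GV :: "sat_inst \<Rightarrow> vtx set" where
  "GV I = {Lit b j | b j. 1 \<le> j \<and> j \<le> fst I}
        \<union> {Av i | i. 1 \<le> i \<and> i \<le> length (snd I)}
        \<union> {Cv i | i. 1 \<le> i \<and> i \<le> length (snd I)}
        \<union> {Tv i | i. 1 \<le> i \<and> i \<le> length (snd I)}
        \<union> {Rv, Pv, Qv, Uv}"

definition base_adj :: "sat_inst \<Rightarrow> vtx \<Rightarrow> vtx \<Rightarrow> bool" where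
  "base_adj I u v \<longleftrightarrow>
     (\<exists>b j b' j'. u = Lit b j \<and> v = Lit b' j' \<and> j \<noteq> j')
   \<or> (\<exists>i. (u = Av i \<and> v = Cv i) \<or> (u = Av i \<and> v = Tv i) \<or> (u = Cv i \<and> v = Tv i))
   \<or> (\<exists>i b j. u = Cv i \<and> v = Lit b j \<and> (j, b) \<in> set (snd I ! (i - 1)))
   \<or> (u = Rv \<and> v \<noteq> Uv \<and> \<not> is_t v)
   \<or> (u = Uv \<and> v \<noteq> Rv \<and> \<not> is_t v)
   \<or> (u = Pv \<and> (is_lit v \<or> v = Qv))
   \<or> (u = Qv \<and> (is_lit v \<or> is_a v))"

definition GE :: "sat_inst \<Rightarrow> vtx \<Rightarrow> vtx \<Rightarrow> bool" where
  "GE I u v \<longleftrightarrow> u \<in> GV I \<and> v \<in> GV I \<and> u \<noteq> v \<and> (base_adj I u v \<or> base_adj I v u)"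

end

theory Submission
  imports Defs
begin


lemma modd: "i < (n::nat) \<Longrightarrow> d \<le> n \<Longrightarrow> (i + d) mod n = (if i + d < n then i+d else i+d-n)"
  by (simp add: mod_if le_mod_geq)

lemma mods: "i < (n::nat) \<Longrightarrow> Suc i mod n = (if Suc i < n then Suc i else 0)"
  by (simp add: mod_Suc)

definition good :: "vtx set \<Rightarrow> (vtx \<Rightarrow> vtx \<Rightarrow> bool) \<Rightarrow> (int \<Rightarrow> vtx) \<Rightarrow> bool" where
  "good V E w \<longleftrightarrow> (\<forall>k. w k \<in> V \<and> E (w k) (w (k+1)) \<and> E (w (k+1)) (w k)
     \<and> \<not> E (w k) (w (k+2)) \<and> \<not> E (w (k+2)) (w k) \<and> \<not> E (w k) (w (k+3)) \<and> \<not> E (w (k+3)) (w k)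
     \<and> w k \<noteq> w (k+1) \<and> w k \<noteq> w (k+2) \<and> w k \<noteq> w (k+3) \<and> w k \<noteq> w (k+4))"

lemma cyc_facts:
  assumes c: "induced_cycle V E cs" and n: "n = length cs" "5 \<le> n" and i: "i < n"
  shows "cs ! i \<in> V" "E (cs!i) (cs!((i+1) mod n))" "E (cs!((i+1) mod n)) (cs!i)"
    "\<not> E (cs!i) (cs!((i+2) mod n))" "\<not> E (cs!((i+2) mod n)) (cs!i)"
    "\<not> E (cs!i) (cs!((i+3) mod n))" "\<not> E (cs!((i+3) mod n)) (cs!i)"
    "cs!i \<noteq> cs!((i+1) mod n)" "cs!i \<noteq> cs!((i+2) mod n)" "cs!i \<noteq> cs!((i+3) mod n)" "cs!i \<noteq> cs!((i+4) mod n)"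
proof -
  have D: "distinct cs" and S: "set cs \<subseteq> V" and
    A: "\<And>i j. i < n \<Longrightarrow> j < n \<Longrightarrow> i \<noteq> j \<Longrightarrow> E (cs ! i) (cs ! j) \<longleftrightarrow> (j = Suc i mod n \<or> i = Suc j mod n)"
    using c n unfolding induced_cycle_def by auto
  show "cs ! i \<in> V" using S i n by auto
  have lt: "(i + d) mod n < n" for d using i by simp
  have ne: "\<And>d. 0 < d \<Longrightarrow> d < n \<Longrightarrow> (i + d) mod n \<noteq> i" using i n by (auto simp: modd)
  have dd: "\<And>d. 0 < d \<Longrightarrow> d < n \<Longrightarrow> cs!i \<noteq> cs!((i+d) mod n)"
    using D ne lt i n by (metis nth_eq_iff_index_eq)
  show "cs!i \<noteq> cs!((i+1) mod n)" "cs!i \<noteq> cs!((i+2) mod n)" "cs!i \<noteq> cs!((i+3) mod n)" "cs!i \<noteq> cs!((i+4) mod n)"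
    using dd[of 1] dd[of 2] dd[of 3] dd[of 4] n by auto
  have X: "\<And>d. 0 < d \<Longrightarrow> d < n \<Longrightarrow> (E (cs!i) (cs!((i+d) mod n)) \<longleftrightarrow> (d = 1 \<or> d = n - 1))
     \<and> (E (cs!((i+d) mod n)) (cs!i) \<longleftrightarrow> (d = 1 \<or> d = n - 1))"
  proof -
    fix d assume d: "0 < d" "d < n"
    have j: "(i+d) mod n < n" "(i+d) mod n \<noteq> i" using lt ne d by auto
    show "?thesis d"
      using A[OF i j(1) j(2)[symmetric]] A[OF j(1) i j(2)] i d
      by (auto simp: modd mods split: if_splits)
  qed
  show "E (cs!i) (cs!((i+1) mod n))" "E (cs!((i+1) mod n)) (cs!i)"
    "\<not> E (cs!i) (cs!((i+2) mod n))" "\<not> E (cs!((i+2) mod n)) (cs!i)"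
    "\<not> E (cs!i) (cs!((i+3) mod n))" "\<not> E (cs!((i+3) mod n)) (cs!i)"
    using X[of 1] X[of 2] X[of 3] n by auto
qed

lemma nat_mod_shift: "0 < n \<Longrightarrow> nat ((k + int d) mod int n) = (nat (k mod int n) + d) mod n"
proof -
  assume "0 < n"
  have "(k + int d) mod int n = (k mod int n + int d) mod int n" by (simp add: mod_add_left_eq)
  also have "\<dots> = int ((nat (k mod int n) + d) mod n)"
    using \<open>0 < n\<close> by (simp add: zmod_int)
  finally show ?thesis by simp
qed

lemma cycle_good:
  assumes c: "induced_cycle V E cs" and n: "5 \<le> length cs"
  shows "good V E (\<lambda>k. cs ! nat (k mod int (length cs)))"
  unfolding good_def
  apply (intro allI)
  subgoal for k
  proof -
  let ?n = "length cs"
  define i where "i = nat (k mod int ?n)"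
  have np: "(0::int) < int ?n" using n by (cases cs) auto
  have i0: "k mod int ?n < int ?n" "0 \<le> k mod int ?n"
    using pos_mod_bound[OF np] pos_mod_sign[OF np] by blast+
  have i: "i < ?n" using i0 unfolding i_def by (simp add: nat_less_iff)
  have sh: "\<And>d::nat. nat ((k + int d) mod int ?n) = (i + d) mod ?n"
    using np unfolding i_def by (intro nat_mod_shift) simp
  have s1: "nat ((k + 1) mod int ?n) = (i + 1) mod ?n" using sh[of 1] by simp
  have s2: "nat ((k + 2) mod int ?n) = (i + 2) mod ?n" using sh[of 2] by simp
  have s3: "nat ((k + 3) mod int ?n) = (i + 3) mod ?n" using sh[of 3] by simp
  have s4: "nat ((k + 4) mod int ?n) = (i + 4) mod ?n" using sh[of 4] by simp
  note F = cyc_facts[OF c refl n i]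
  show ?thesis
    unfolding s1 s2 s3 s4 i_def[symmetric] using F by blast
  qed
  done



fun adjc :: "sat_inst \<Rightarrow> vtx \<Rightarrow> vtx \<Rightarrow> bool" where
  "adjc I (Lit b j) (Lit b' j') = (j \<noteq> j')"
| "adjc I (Lit b j) (Cv i) = ((j,b) \<in> set (snd I ! (i-1)))"
| "adjc I (Cv i) (Lit b j) = ((j,b) \<in> set (snd I ! (i-1)))"
| "adjc I (Lit b j) v = (v = Rv \<or> v = Uv \<or> v = Pv \<or> v = Qv)"
| "adjc I (Av i) v = (v = Cv i \<or> v = Tv i \<or> v = Rv \<or> v = Uv \<or> v = Qv)"
| "adjc I (Cv i) v = (v = Av i \<or> v = Tv i \<or> v = Rv \<or> v = Uv)"
| "adjc I (Tv i) v = (v = Av i \<or> v = Cv i)"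
| "adjc I Rv v = (v \<noteq> Rv \<and> v \<noteq> Uv \<and> \<not> is_t v)"
| "adjc I Uv v = (v \<noteq> Uv \<and> v \<noteq> Rv \<and> \<not> is_t v)"
| "adjc I Pv v = (is_lit v \<or> v = Qv \<or> v = Rv \<or> v = Uv)"
| "adjc I Qv v = (is_lit v \<or> is_a v \<or> v = Pv \<or> v = Rv \<or> v = Uv)"

lemma GE_eq: "GE I u v \<longleftrightarrow> u \<in> GV I \<and> v \<in> GV I \<and> adjc I u v"
  unfolding GE_def base_adj_def
  by (cases u; cases v; auto simp: is_t_def is_lit_def is_a_def)

lemma GV_simps[simp]: "Rv \<in> GV I" "Uv \<in> GV I" "Pv \<in> GV I" "Qv \<in> GV I"
  by (auto simp: GV_def)



lemma gA: "good V E w \<Longrightarrow> b = a + 1 \<or> a = b + 1 \<Longrightarrow> E (w a) (w b)"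
  unfolding good_def by auto
lemma gN: "good V E w \<Longrightarrow> b = a + 2 \<or> a = b + 2 \<or> b = a + 3 \<or> a = b + 3 \<Longrightarrow> \<not> E (w a) (w b)"
  unfolding good_def by auto
lemma gD: "good V E w \<Longrightarrow> b = a + d \<Longrightarrow> d \<in> {1,2,3,4} \<Longrightarrow> w a \<noteq> w b"
  unfolding good_def by auto
lemma gV: "good V E w \<Longrightarrow> w a \<in> V"
  unfolding good_def by auto

lemmas GS = GE_eq is_t_def is_lit_def is_a_def

context fixes I :: sat_inst and w :: "int \<Rightarrow> vtx" assumes g: "good (GV I) (GE I) w"
begin

lemma noT: "w k \<noteq> Tv i"
proof
  assume h: "w k = Tv i"
  have a: "GE I (w (k-1)) (w k)" "GE I (w k) (w (k+1))" by (rule gA[OF g], simp)+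
  have b: "\<not> GE I (w (k-1)) (w (k+1))" by (rule gN[OF g], simp)
  have c: "w (k-1) \<noteq> w (k+1)" by (rule gD[OF g, of _ _ 2]) auto
  have "w (k-1) = Av i \<or> w (k-1) = Cv i" using a(1) h by (cases "w (k-1)") (auto simp: GS)
  moreover have "w (k+1) = Av i \<or> w (k+1) = Cv i" using a(2) h by (cases "w (k+1)") (auto simp: GS)
  ultimately show False using a b c by (auto simp: GS)
qed

lemma noRU: "w k \<noteq> Rv" "w k \<noteq> Uv"
proof -
  have a: "GE I (w (k+2)) (w (k+3))" by (rule gA[OF g], simp)
  have b: "\<not> GE I (w k) (w (k+2))" "\<not> GE I (w k) (w (k+3))" by (rule gN[OF g], simp)+
  have c: "w k \<noteq> w (k+2)" "w k \<noteq> w (k+3)" by (rule gD[OF g], simp, simp)+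
  have d: "w (k+2) \<in> GV I" "w (k+3) \<in> GV I" by (rule gV[OF g])+
  show "w k \<noteq> Rv"
  proof
    assume h: "w k = Rv"
    have "w (k+2) = Uv" using b(1) c(1) d h noT[of "k+2"] by (cases "w (k+2)") (auto simp: GS)
    moreover have "w (k+3) = Uv" using b(2) c(2) d h noT[of "k+3"] by (cases "w (k+3)") (auto simp: GS)
    ultimately show False using a by (auto simp: GS)
  qed
  show "w k \<noteq> Uv"
  proof
    assume h: "w k = Uv"
    have "w (k+2) = Rv" using b(1) c(1) d h noT[of "k+2"] by (cases "w (k+2)") (auto simp: GS)
    moreover have "w (k+3) = Rv" using b(2) c(2) d h noT[of "k+3"] by (cases "w (k+3)") (auto simp: GS)
    ultimately show False using a by (auto simp: GS)
  qed
qed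

lemma noA: "w k \<noteq> Av i"
proof
  assume h: "w k = Av i"
  have a: "GE I (w (k-2)) (w (k-1))" "GE I (w (k-1)) (w k)" "GE I (w k) (w (k+1))" "GE I (w (k+1)) (w (k+2))"
    by (rule gA[OF g], simp)+
  have b: "\<not> GE I (w (k-1)) (w (k+1))" "\<not> GE I (w (k-2)) (w (k+1))" "\<not> GE I (w (k-1)) (w (k+2))"
     "\<not> GE I (w (k-2)) (w k)" "\<not> GE I (w k) (w (k+2))"
    by (rule gN[OF g], simp)+
  have c: "w (k-1) \<noteq> w (k+1)" "w (k-2) \<noteq> w k" "w k \<noteq> w (k+2)" by (rule gD[OF g], simp, simp)+
  have e: "w (k-1) = Cv i \<or> w (k-1) = Qv" using a(2) h noT[of "k-1"] noRU[of "k-1"] by (cases "w (k-1)") (auto simp: GS)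
  moreover have "w (k+1) = Cv i \<or> w (k+1) = Qv" using a(3) h noT[of "k+1"] noRU[of "k+1"] by (cases "w (k+1)") (auto simp: GS)
  moreover have "w (k-1) = Cv i \<Longrightarrow> is_lit (w (k-2))"
    using a(1) b(4) c h noT[of "k-2"] noRU[of "k-2"] by (cases "w (k-2)") (auto simp: GS)
  moreover have "w (k+1) = Cv i \<Longrightarrow> is_lit (w (k+2))"
    using a(4) b(5) c h noT[of "k+2"] noRU[of "k+2"] by (cases "w (k+2)") (auto simp: GS)
  ultimately show False using a b c by (auto simp: GS)
qed

lemma noPQ: "w k \<noteq> Pv \<and> w k \<noteq> Qv"
proof -
  { fix k assume h: "w k = Pv"
  have a: "GE I (w (k-1)) (w k)" "GE I (w k) (w (k+1))" "GE I (w (k+1)) (w (k+2))" "GE I (w (k+2)) (w (k+3))"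
    by (rule gA[OF g], simp)+
  have b: "\<not> GE I (w (k-1)) (w (k+1))" "\<not> GE I (w (k-1)) (w (k+2))" "\<not> GE I (w k) (w (k+2))"
     "\<not> GE I (w k) (w (k+3))"
    by (rule gN[OF g], simp)+
  have c: "w (k-1) \<noteq> w (k+1)" "w k \<noteq> w (k+2)" by (rule gD[OF g], simp, simp)+
  have "is_lit (w (k-1))" using c(1) a(1) b(1) h noT[of "k-1"] noRU[of "k-1"] noA[of "k-1"] noT[of "k+1"] noRU[of "k+1"] noA[of "k+1"] a(2)
    by (cases "w (k-1)"; cases "w (k+1)") (auto simp: GS)
  moreover have "is_lit (w (k+1))" using c(1) a(1) b(1) h noT[of "k-1"] noRU[of "k-1"] noA[of "k-1"] noT[of "k+1"] noRU[of "k+1"] noA[of "k+1"] a(2)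
    by (cases "w (k-1)"; cases "w (k+1)") (auto simp: GS)
  ultimately have "\<exists>m. w (k+2) = Cv m" using a(3) b(2) b(3) c h noT[of "k+2"] noRU[of "k+2"] noA[of "k+2"]
    by (cases "w (k+2)") (auto simp: GS)
  then have False using a(4) b(4) h noT[of "k+3"] noRU[of "k+3"] noA[of "k+3"]
    by (cases "w (k+3)") (auto simp: GS)
  } note P = this
  show ?thesis
  proof
    show "w k \<noteq> Pv" using P by blast
    show "w k \<noteq> Qv"
    proof
      assume h: "w k = Qv"
      have a: "GE I (w (k-1)) (w k)" "GE I (w k) (w (k+1))" "GE I (w (k+1)) (w (k+2))" "GE I (w (k+2)) (w (k+3))"
        by (rule gA[OF g], simp)+
      have b: "\<not> GE I (w (k-1)) (w (k+1))" "\<not> GE I (w (k-1)) (w (k+2))" "\<not> GE I (w k) (w (k+2))"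
         "\<not> GE I (w k) (w (k+3))"
        by (rule gN[OF g], simp)+
      have c: "w (k-1) \<noteq> w (k+1)" "w k \<noteq> w (k+2)" by (rule gD[OF g], simp, simp)+
      have np: "\<And>m. w m \<noteq> Pv" using P by blast
      have "is_lit (w (k+1))" using a(2) h noT[of "k+1"] noRU[of "k+1"] noA[of "k+1"] np[of "k+1"]
        by (cases "w (k+1)") (auto simp: GS)
      moreover have "is_lit (w (k-1))" using a(1) h noT[of "k-1"] noRU[of "k-1"] noA[of "k-1"] np[of "k-1"]
        by (cases "w (k-1)") (auto simp: GS)
      ultimately have "\<exists>m. w (k+2) = Cv m" using a(3) b(2) b(3) c h noT[of "k+2"] noRU[of "k+2"] noA[of "k+2"] np[of "k+2"]
        by (cases "w (k+2)") (auto simp: GS)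
      then show False using a(4) b(4) h noT[of "k+3"] noRU[of "k+3"] noA[of "k+3"]
        by (cases "w (k+3)") (auto simp: GS)
    qed
  qed
qed

lemma noC: "w k \<noteq> Cv i"
proof
  assume h: "w k = Cv i"
  have a: "GE I (w (k-1)) (w k)" "GE I (w k) (w (k+1))" "GE I (w (k+1)) (w (k+2))" "GE I (w (k+2)) (w (k+3))"
    by (rule gA[OF g], simp)+
  have b: "\<not> GE I (w (k-1)) (w (k+1))" "\<not> GE I (w (k-1)) (w (k+2))" "\<not> GE I (w k) (w (k+2))"
     "\<not> GE I (w (k+1)) (w (k+3))"
    by (rule gN[OF g], simp)+
  have c: "w (k-1) \<noteq> w (k+1)" "w k \<noteq> w (k+2)" "w (k-1) \<noteq> w (k+2)" "w (k-1) \<noteq> w (k+3)" "w (k+1) \<noteq> w (k+3)"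
    by (rule gD[OF g], simp, simp)+
  have ex: "\<And>m. w m \<noteq> Rv \<and> w m \<noteq> Uv \<and> w m \<noteq> Pv \<and> w m \<noteq> Qv \<and> (\<forall>i. w m \<noteq> Tv i \<and> w m \<noteq> Av i)"
    using noT noRU noA noPQ by blast
  obtain b1 j1 where l1: "w (k-1) = Lit b1 j1" using a(1) h ex[of "k-1"] by (cases "w (k-1)") (auto simp: GS)
  obtain b2 j2 where l2: "w (k+1) = Lit b2 j2" using a(2) h ex[of "k+1"] by (cases "w (k+1)") (auto simp: GS)
  have jj: "j2 = j1" "b2 \<noteq> b1" using l1 l2 a b c by (auto simp: GS)
  obtain m where m: "w (k+2) = Cv m" using a b(2) c l1 l2 jj ex[of "k+2"] by (cases "w (k+2)") (auto simp: GS)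
  show False using a b(4) c l1 l2 jj m ex[of "k+3"] by (cases "w (k+3)") (auto simp: GS)
qed

lemma noLit: "w k \<noteq> Lit b j"
proof
  assume h: "w k = Lit b j"
  have a: "GE I (w k) (w (k+1))" "GE I (w (k+1)) (w (k+2))" "GE I (w (k+2)) (w (k+3))"
    by (rule gA[OF g], simp)+
  have b: "\<not> GE I (w k) (w (k+2))" "\<not> GE I (w (k+1)) (w (k+3))" "\<not> GE I (w k) (w (k+3))"
    by (rule gN[OF g], simp)+
  have c: "w k \<noteq> w (k+2)" "w (k+1) \<noteq> w (k+3)" "w k \<noteq> w (k+3)"
    by (rule gD[OF g], simp, simp)+
  have ex: "\<And>m. \<exists>b j. w m = Lit b j"
  proof -
    fix m show "\<exists>b j. w m = Lit b j" using noT noRU noA noPQ noC by (cases "w m") auto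
  qed
  obtain b1 j1 where 1: "w (k+1) = Lit b1 j1" using ex by blast
  obtain b2 j2 where 2: "w (k+2) = Lit b2 j2" using ex by blast
  obtain b3 j3 where 3: "w (k+3) = Lit b3 j3" using ex by blast
  show False using a b c h 1 2 3 by (auto simp: GS)
qed

lemma G_false: False
  using noT noRU noA noPQ noC noLit by (cases "w 0") auto

end



context fixes I :: sat_inst and w :: "int \<Rightarrow> vtx" assumes g: "good (GV I) (compl_adj (GE I)) w"
begin

abbreviation "H \<equiv> compl_adj (GE I)"

lemmas HS = compl_adj_def GS

lemma cRU: "w k \<noteq> Rv" "w k \<noteq> Uv"
proof -
  have a: "H (w (k-1)) (w k)" "H (w k) (w (k+1))" by (rule gA[OF g], simp)+
  have b: "\<not> H (w (k-1)) (w (k+1))" by (rule gN[OF g], simp)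
  have c: "w (k-1) \<noteq> w (k+1)" by (rule gD[OF g, of _ _ 2]) auto
  have d: "w (k-1) \<in> GV I" "w (k+1) \<in> GV I" by (rule gV[OF g])+
  show "w k \<noteq> Rv" "w k \<noteq> Uv"
    using a b c d by (cases "w (k-1)"; cases "w (k+1)"; auto simp: HS)+
qed

lemma cT: "w k \<noteq> Tv i"
proof
  assume h: "w k = Tv i"
  have a: "H (w (k+2)) (w (k+3))" by (rule gA[OF g], simp)
  have b: "\<not> H (w k) (w (k+2))" "\<not> H (w k) (w (k+3))" by (rule gN[OF g], simp)+
  have c: "w k \<noteq> w (k+2)" "w k \<noteq> w (k+3)" by (rule gD[OF g], simp, simp)+
  have d: "w k \<in> GV I" "w (k+2) \<in> GV I" "w (k+3) \<in> GV I" by (rule gV[OF g])+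
  have "w (k+2) = Av i \<or> w (k+2) = Cv i" using b(1) c(1) h d by (cases "w (k+2)") (auto simp: HS)
  moreover have "w (k+3) = Av i \<or> w (k+3) = Cv i" using b(2) c(2) h d by (cases "w (k+3)") (auto simp: HS)
  ultimately show False using a d by (auto simp: HS)
qed

lemma cQ: "w k \<noteq> Qv"
proof
  assume h: "w k = Qv"
  have a: "H (w (k-1)) (w k)" "H (w k) (w (k+1))" by (rule gA[OF g], simp)+
  have b: "\<not> H (w (k-1)) (w (k+1))" by (rule gN[OF g], simp)
  have c: "w (k-1) \<noteq> w (k+1)" by (rule gD[OF g, of _ _ 2]) auto
  have d: "w (k-1) \<in> GV I" "w (k+1) \<in> GV I" by (rule gV[OF g])+
  have "\<exists>m. w (k-1) = Cv m" using a(1) h d cT[of "k-1"] by (cases "w (k-1)") (auto simp: HS)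
  moreover have "\<exists>m. w (k+1) = Cv m" using a(2) h d cT[of "k+1"] by (cases "w (k+1)") (auto simp: HS)
  ultimately show False using b c by (auto simp: HS)
qed

lemma cA: "w k \<noteq> Av i"
proof
  assume h: "w k = Av i"
  have b: "\<not> H (w k) (w (k+2))" "\<not> H (w k) (w (k+3))" by (rule gN[OF g], simp)+
  have c: "w k \<noteq> w (k+2)" "w k \<noteq> w (k+3)" "w (k+2) \<noteq> w (k+3)" by (rule gD[OF g], simp, simp)+
  have d: "w k \<in> GV I" "w (k+2) \<in> GV I" "w (k+3) \<in> GV I" by (rule gV[OF g])+
  have "w (k+2) = Cv i" using b(1) c(1) h d cT[of "k+2"] cRU[of "k+2"] cQ[of "k+2"] by (cases "w (k+2)") (auto simp: HS)
  moreover have "w (k+3) = Cv i" using b(2) c(2) h d cT[of "k+3"] cRU[of "k+3"] cQ[of "k+3"] by (cases "w (k+3)") (auto simp: HS)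
  ultimately show False using c by simp
qed

lemma cP: "w k \<noteq> Pv"
proof
  assume h: "w k = Pv"
  have a: "H (w (k-1)) (w k)" "H (w k) (w (k+1))" by (rule gA[OF g], simp)+
  have b: "\<not> H (w (k-1)) (w (k+1))" by (rule gN[OF g], simp)
  have c: "w (k-1) \<noteq> w (k+1)" by (rule gD[OF g, of _ _ 2]) auto
  have d: "w (k-1) \<in> GV I" "w (k+1) \<in> GV I" by (rule gV[OF g])+
  have "\<exists>m. w (k-1) = Cv m" using a(1) h d cT[of "k-1"] cA[of "k-1"] by (cases "w (k-1)") (auto simp: HS)
  moreover have "\<exists>m. w (k+1) = Cv m" using a(2) h d cT[of "k+1"] cA[of "k+1"] by (cases "w (k+1)") (auto simp: HS)
  ultimately show False using b c by (auto simp: HS)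
qed

lemma cex: "(\<exists>b j. w m = Lit b j) \<or> (\<exists>i. w m = Cv i)"
  using cRU cT cQ cA cP by (cases "w m") auto

lemma cLit: "w k \<noteq> Lit b j"
proof
  assume h: "w k = Lit b j"
  have a: "H (w (k-2)) (w (k-1))" "H (w (k-1)) (w k)" "H (w k) (w (k+1))" "H (w (k+1)) (w (k+2))"
    by (rule gA[OF g], simp)+
  have b: "\<not> H (w (k-1)) (w (k+1))" "\<not> H (w (k-2)) (w k)" "\<not> H (w k) (w (k+2))"
    "\<not> H (w (k-2)) (w (k+1))" "\<not> H (w (k-1)) (w (k+2))"
    by (rule gN[OF g], simp)+
  have c: "w (k-1) \<noteq> w (k+1)" "w (k-2) \<noteq> w k" "w k \<noteq> w (k+2)" "w (k-2) \<noteq> w (k+1)" "w (k-1) \<noteq> w (k+2)"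
    by (rule gD[OF g], simp, simp)+
  have d: "w (k-2) \<in> GV I" "w (k-1) \<in> GV I" "w (k+1) \<in> GV I" "w (k+2) \<in> GV I" by (rule gV[OF g])+
  show False
    using cex[of "k-2"] cex[of "k-1"] cex[of "k+1"] cex[of "k+2"] a b c d h
    by (auto simp: HS)
qed

lemma H_false: False
proof -
  have b: "\<not> H (w 0) (w 2)" by (rule gN[OF g], simp)
  have c: "w 0 \<noteq> w 2" by (rule gD[OF g], simp, simp)
  show False using cex[of 0] cex[of 2] cLit b c by (auto simp: HS)
qed

end


theorem lemma8:
  assumes "wf_instance I"
  shows "weakly_chordal (GV I) (GE I)"
  unfolding weakly_chordal_def
proof (intro conjI allI impI)
  fix cs assume c: "induced_cycle (GV I) (GE I) cs"
  show "length cs < 5"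
  proof (rule ccontr)
    assume "\<not> length cs < 5"
    then have "5 \<le> length cs" by simp
    from cycle_good[OF c this] show False by (rule G_false)
  qed
next
  fix cs assume c: "induced_cycle (GV I) (compl_adj (GE I)) cs"
  show "length cs < 5"
  proof (rule ccontr)
    assume "\<not> length cs < 5"
    then have "5 \<le> length cs" by simp
    from cycle_good[OF c this] show False by (rule H_false)
  qed
qed

end
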